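(* For every $\mathcal{C}$-algebra $A$, the derived operation $\widetilde{\omega}_{\Phi(A)}$ on $s_A(|A|)$, defined by $\widetilde{\omega}_{\Phi(A)}(u_1,\dots,u_k)=\Phi(\theta)(\tilde{\mathbf w})$ (where $u_i=s_A(a_i)$ with $a_i\in A$, $\theta:F\to A$ is the homomorphism with $\theta(x_i)=a_i$ for $i=1,\dots,k$, and $\tilde{\mathbf w}=s_F(\omega(x_1,\dots,x_k))\in\Phi(F)$), coincides with the induced operation $\omega^*_A$ on $s_A(|A|)$, that is, $$s_A(\omega_A(a_1,\dots,a_k))=\widetilde{\omega}_{\Phi(A)}(s_A(a_1),\dots,s_A(a_k))$$ for all $a_1,\dots,a_k\in A$.
   Context: Let $\mathcal{V}$ be a variety of universal algebras of signature $\Omega$, and let $\mathrm{Th}^0(\mathcal{V})$ be the category of free $\mathcal{V}$-algebras over finite subsets of a fixed infinite set of variables, with their homomorphisms; it carries the forgetful functor to sets assigning to an algebra $A$ its underlying set $|A|$. Let $\mathcal{C}$ be a full subcategory of $\mathrm{Th}^0(\mathcal{V})$ containing the monogenic free algebra $A_0$ freely generated by $x_0$, and let $\Phi$ be an automorphism of $\mathcal{C}$. For a $\mathcal{C}$-algebra $A$ and $a\in A$, let $\alpha^A_a:A_0\to A$ be the unique homomorphism with $\alpha^A_a(x_0)=a$. Fix a basis $X$ of $\Phi^{-1}(A_0)$, let $\eta_0:\Phi^{-1}(A_0)\to A_0$ be the homomorphism sending every element of $X$ to $x_0$ (if $\Phi^{-1}(A_0)\cong A_0$, take $\eta_0$ to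 be an isomorphism; if $\Phi(A_0)=A_0$, take $\eta_0=1_{A_0}$), and put $\eta=\Phi(\eta_0):A_0\to\Phi(A_0)$. The main function of $\Phi$ is the family of (injective) maps $s_A:|A|\to|\Phi(A)|$, $s_A(a)=\Phi(\alpha^A_a)\circ\eta\,(x_0)$. For a $k$-ary operation symbol $\omega\in\Omega$ with corresponding operation $\omega_A$ on $A$, the induced operation $\omega^*_A$ on $s_A(|A|)$ is defined by $\omega^*_A(s_A(a_1),\dots,s_A(a_k))=s_A(\omega_A(a_1,\dots,a_k))$. Assume all arities of operations of $\mathcal{V}$ are less than some $n$, and let $F$ be a $\mathcal{C}$-algebra with basis $\{x_1,\dots,x_n\}$; set $\mathbf w=\omega(x_1,\dots,x_k)\in F$ and $\tilde{\mathbf w}=s_F(\mathbf w)\in\Phi(F)$. *)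

theory Defs
  imports Main "HOL-Library.FuncSet"
begin

datatype ('o,'v) trm = Var 'v | Op 'o "('o,'v) trm list"

fun wf_trm :: "('o \<Rightarrow> nat) \<Rightarrow> ('o,'v) trm \<Rightarrow> bool" where
  "wf_trm ar (Var x) = True"
| "wf_trm ar (Op f ts) = (length ts = ar f \<and> (\<forall>t\<in>set ts. wf_trm ar t))"

fun vars :: "('o,'v) trm \<Rightarrow> 'v set" where
  "vars (Var x) = {x}"
| "vars (Op f ts) = (\<Union>t\<in>set ts. vars t)"

fun subst :: "('v \<Rightarrow> ('o,'v) trm) \<Rightarrow> ('o,'v) trm \<Rightarrow> ('o,'v) trm" where
  "subst \<sigma> (Var x) = \<sigma> x"
| "subst \<sigma> (Op f ts) = Op f (map (subst \<sigma>) ts)"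

fun eval :: "('o \<Rightarrow> 'c list \<Rightarrow> 'c) \<Rightarrow> ('v \<Rightarrow> 'c) \<Rightarrow> ('o,'v) trm \<Rightarrow> 'c" where
  "eval ops \<rho> (Var x) = \<rho> x"
| "eval ops \<rho> (Op f ts) = ops f (map (eval ops \<rho>) ts)"

section \<open>Varieties, given by a set E of identities (Birkhoff)\<close>

definition variety :: "('o \<Rightarrow> nat) \<Rightarrow> (('o,'v) trm \<times> ('o,'v) trm) set \<Rightarrow> bool" where
  "variety ar E \<longleftrightarrow> (\<forall>(l,r)\<in>E. wf_trm ar l \<and> wf_trm ar r)"

inductive eq_deriv :: "('o \<Rightarrow> nat) \<Rightarrow> (('o,'v) trm \<times> ('o,'v) trm) set
    \<Rightarrow> ('o,'v) trm \<Rightarrow> ('o,'v) trm \<Rightarrow> bool" for ar E where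
  ax: "(l,r) \<in> E \<Longrightarrow> (\<forall>x. wf_trm ar (\<sigma> x)) \<Longrightarrow> eq_deriv ar E (subst \<sigma> l) (subst \<sigma> r)"
| refl: "wf_trm ar t \<Longrightarrow> eq_deriv ar E t t"
| sym: "eq_deriv ar E s t \<Longrightarrow> eq_deriv ar E t s"
| trans: "eq_deriv ar E s t \<Longrightarrow> eq_deriv ar E t u \<Longrightarrow> eq_deriv ar E s u"
| cong: "length ss = ar f \<Longrightarrow> length ts = ar f \<Longrightarrow> (\<forall>i<ar f. eq_deriv ar E (ss!i) (ts!i))
          \<Longrightarrow> eq_deriv ar E (Op f ss) (Op f ts)"

type_synonym ('o,'c) alg = "'c set \<times> ('o \<Rightarrow> 'c list \<Rightarrow> 'c)"

definition is_alg :: "('o \<Rightarrow> nat) \<Rightarrow> ('o,'c) alg \<Rightarrow> bool" where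
  "is_alg ar A \<longleftrightarrow> (\<forall>f as. length as = ar f \<and> set as \<subseteq> fst A \<longrightarrow> snd A f as \<in> fst A)"

definition models :: "('o \<Rightarrow> nat) \<Rightarrow> (('o,'v) trm \<times> ('o,'v) trm) set \<Rightarrow> ('o,'c) alg \<Rightarrow> bool" where
  "models ar E A \<longleftrightarrow> is_alg ar A \<and>
     (\<forall>(l,r)\<in>E. \<forall>\<rho>::'v \<Rightarrow> 'c. \<rho> \<in> UNIV \<rightarrow> fst A \<longrightarrow> eval (snd A) \<rho> l = eval (snd A) \<rho> r)"

definition is_hom :: "('o \<Rightarrow> nat) \<Rightarrow> ('o,'a) alg \<Rightarrow> ('o,'b) alg \<Rightarrow> ('a \<Rightarrow> 'b) \<Rightarrow> bool" where
  "is_hom ar A B h \<longleftrightarrow> h \<in> fst A \<rightarrow> fst B \<and>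
     (\<forall>f as. length as = ar f \<and> set as \<subseteq> fst A \<longrightarrow> h (snd A f as) = snd B f (map h as))"

section \<open>Free V-algebras F(X) over sets X of variables (terms modulo derivable equality)\<close>

definition cls :: "('o \<Rightarrow> nat) \<Rightarrow> (('o,'v) trm \<times> ('o,'v) trm) set \<Rightarrow> ('o,'v) trm \<Rightarrow> ('o,'v) trm set" where
  "cls ar E t = {s. eq_deriv ar E s t}"

definition fcarrier :: "('o \<Rightarrow> nat) \<Rightarrow> (('o,'v) trm \<times> ('o,'v) trm) set \<Rightarrow> 'v set \<Rightarrow> ('o,'v) trm set set" where
  "fcarrier ar E X = {cls ar E t | t. wf_trm ar t \<and> vars t \<subseteq> X}"

definition fops :: "('o \<Rightarrow> nat) \<Rightarrow> (('o,'v) trm \<times> ('o,'v) trm) set \<Rightarrow> 'o \<Rightarrow> ('o,'v) trm set list \<Rightarrow> ('o,'v) trm set" where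
  "fops ar E f cs = cls ar E (Op f (map (\<lambda>c. SOME t. t \<in> c) cs))"

definition FA :: "('o \<Rightarrow> nat) \<Rightarrow> (('o,'v) trm \<times> ('o,'v) trm) set \<Rightarrow> 'v set \<Rightarrow> ('o, ('o,'v) trm set) alg" where
  "FA ar E X = (fcarrier ar E X, fops ar E)"

section \<open>The category Th0(V): objects are finite sets of variables X (standing for F(X))\<close>

definition Hom :: "('o \<Rightarrow> nat) \<Rightarrow> (('o,'v) trm \<times> ('o,'v) trm) set \<Rightarrow> 'v set \<Rightarrow> 'v set
    \<Rightarrow> (('o,'v) trm set \<Rightarrow> ('o,'v) trm set) set" where
  "Hom ar E X Y = {h. is_hom ar (FA ar E X) (FA ar E Y) h \<and> h \<in> extensional (fcarrier ar E X)}"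

definition idm :: "('o \<Rightarrow> nat) \<Rightarrow> (('o,'v) trm \<times> ('o,'v) trm) set \<Rightarrow> 'v set
    \<Rightarrow> ('o,'v) trm set \<Rightarrow> ('o,'v) trm set" where
  "idm ar E X = restrict id (fcarrier ar E X)"

definition iso_mor :: "('o \<Rightarrow> nat) \<Rightarrow> (('o,'v) trm \<times> ('o,'v) trm) set \<Rightarrow> 'v set \<Rightarrow> 'v set
    \<Rightarrow> (('o,'v) trm set \<Rightarrow> ('o,'v) trm set) \<Rightarrow> bool" where
  "iso_mor ar E X Y h \<longleftrightarrow> h \<in> Hom ar E X Y \<and>
     (\<exists>g\<in>Hom ar E Y X. compose (fcarrier ar E X) g h = idm ar E X \<and> compose (fcarrier ar E Y) h g = idm ar E Y)"

text \<open>B is a basis of F(X): F(X) is free in V over B (universal property w.r.t. V-algebras;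
  carriers of type ('o,'v) trm set are large enough to contain a free V-algebra over B).\<close>
definition free_basis :: "('o \<Rightarrow> nat) \<Rightarrow> (('o,'v) trm \<times> ('o,'v) trm) set \<Rightarrow> 'v set
    \<Rightarrow> ('o,'v) trm set set \<Rightarrow> bool" where
  "free_basis ar E X B \<longleftrightarrow> B \<subseteq> fcarrier ar E X \<and>
     (\<forall>G :: ('o, ('o,'v) trm set) alg. models ar E G \<longrightarrow>
        (\<forall>g \<in> B \<rightarrow> fst G. \<exists>!h. h \<in> extensional (fcarrier ar E X) \<and>
            is_hom ar (FA ar E X) G h \<and> (\<forall>b\<in>B. h b = g b)))"

definition cat_auto :: "('o \<Rightarrow> nat) \<Rightarrow> (('o,'v) trm \<times> ('o,'v) trm) set \<Rightarrow> 'v set set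
    \<Rightarrow> ('v set \<Rightarrow> 'v set)
    \<Rightarrow> ('v set \<Rightarrow> 'v set \<Rightarrow> (('o,'v) trm set \<Rightarrow> ('o,'v) trm set) \<Rightarrow> (('o,'v) trm set \<Rightarrow> ('o,'v) trm set))
    \<Rightarrow> bool" where
  "cat_auto ar E Ob \<Phi>o \<Phi>m \<longleftrightarrow>
     bij_betw \<Phi>o Ob Ob \<and>
     (\<forall>X\<in>Ob. \<forall>Y\<in>Ob. bij_betw (\<Phi>m X Y) (Hom ar E X Y) (Hom ar E (\<Phi>o X) (\<Phi>o Y))) \<and>
     (\<forall>X\<in>Ob. \<Phi>m X X (idm ar E X) = idm ar E (\<Phi>o X)) \<and>
     (\<forall>X\<in>Ob. \<forall>Y\<in>Ob. \<forall>Z\<in>Ob. \<forall>f\<in>Hom ar E X Y. \<forall>g\<in>Hom ar E Y Z.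
        \<Phi>m X Z (compose (fcarrier ar E X) g f)
          = compose (fcarrier ar E (\<Phi>o X)) (\<Phi>m Y Z g) (\<Phi>m X Y f))"

definition alpha :: "('o \<Rightarrow> nat) \<Rightarrow> (('o,'v) trm \<times> ('o,'v) trm) set \<Rightarrow> 'v \<Rightarrow> 'v set
    \<Rightarrow> ('o,'v) trm set \<Rightarrow> ('o,'v) trm set \<Rightarrow> ('o,'v) trm set" where
  "alpha ar E x0 A a = (THE h. h \<in> Hom ar E {x0} A \<and> h (cls ar E (Var x0)) = a)"

definition eta0_ok :: "('o \<Rightarrow> nat) \<Rightarrow> (('o,'v) trm \<times> ('o,'v) trm) set \<Rightarrow> 'v set set \<Rightarrow> 'v
    \<Rightarrow> ('v set \<Rightarrow> 'v set) \<Rightarrow> (('o,'v) trm set \<Rightarrow> ('o,'v) trm set) \<Rightarrow> bool" where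
  "eta0_ok ar E Ob x0 \<Phi>o \<eta>0 \<longleftrightarrow>
     (let P = inv_into Ob \<Phi>o {x0} in
       \<eta>0 \<in> Hom ar E P {x0} \<and>
       (\<exists>B. free_basis ar E P B \<and> (\<forall>b\<in>B. \<eta>0 b = cls ar E (Var x0))) \<and>
       ((\<exists>h. iso_mor ar E P {x0} h) \<longrightarrow> iso_mor ar E P {x0} \<eta>0) \<and>
       (\<Phi>o {x0} = {x0} \<longrightarrow> \<eta>0 = idm ar E {x0}))"

text \<open>The main function s_A(a) = Phi(alpha^A_a)(eta(x0)), with eta = Phi(eta0).\<close>
definition main_fn :: "('o \<Rightarrow> nat) \<Rightarrow> (('o,'v) trm \<times> ('o,'v) trm) set \<Rightarrow> 'v set set \<Rightarrow> 'v
    \<Rightarrow> ('v set \<Rightarrow> 'v set)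
    \<Rightarrow> ('v set \<Rightarrow> 'v set \<Rightarrow> (('o,'v) trm set \<Rightarrow> ('o,'v) trm set) \<Rightarrow> (('o,'v) trm set \<Rightarrow> ('o,'v) trm set))
    \<Rightarrow> (('o,'v) trm set \<Rightarrow> ('o,'v) trm set) \<Rightarrow> 'v set \<Rightarrow> ('o,'v) trm set \<Rightarrow> ('o,'v) trm set" where
  "main_fn ar E Ob x0 \<Phi>o \<Phi>m \<eta>0 A a =
     \<Phi>m {x0} A (alpha ar E x0 A a) (\<Phi>m (inv_into Ob \<Phi>o {x0}) {x0} \<eta>0 (cls ar E (Var x0)))"

end

theory Submission
  imports Defs
begin

lemma wf_subst: "wf_trm ar t \<Longrightarrow> (\<forall>x. wf_trm ar (\<sigma> x)) \<Longrightarrow> wf_trm ar (subst \<sigma> t)"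
  by (induction t) auto

lemma subst_subst: "subst \<tau> (subst \<sigma> t) = subst (\<lambda>x. subst \<tau> (\<sigma> x)) t"
  by (induction t) auto

lemma vars_subst: "vars (subst \<sigma> t) = (\<Union>x\<in>vars t. vars (\<sigma> x))"
  by (induction t) auto

lemma eq_wf: assumes V: "variety ar E" shows "eq_deriv ar E s t \<Longrightarrow> wf_trm ar s \<and> wf_trm ar t"
proof (induction rule: eq_deriv.induct)
  case (ax l r \<sigma>)
  then show ?case using V unfolding variety_def using wf_subst by fastforce
next
  case (cong ss f ts)
  then show ?case by (auto simp: all_set_conv_all_nth)
qed auto

lemma eq_subst: "eq_deriv ar E s t \<Longrightarrow> (\<forall>x. wf_trm ar (\<tau> x)) \<Longrightarrow> eq_deriv ar E (subst \<tau> s) (subst \<tau> t)"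
proof (induction rule: eq_deriv.induct)
  case (ax l r \<sigma>)
  have "eq_deriv ar E (subst (\<lambda>x. subst \<tau> (\<sigma> x)) l) (subst (\<lambda>x. subst \<tau> (\<sigma> x)) r)"
    by (rule eq_deriv.ax) (use ax wf_subst[of ar "\<sigma> _" \<tau>] in auto)
  then show ?case by (simp add: subst_subst)
next
  case (refl t)
  then show ?case by (simp add: eq_deriv.refl wf_subst)
next
  case (sym s t) then show ?case by (simp add: eq_deriv.sym)
next
  case (trans s t u) then show ?case by (meson eq_deriv.trans)
next
  case (cong ss f ts)
  then show ?case by (auto intro!: eq_deriv.cong)
qed

lemma cls_eq: "eq_deriv ar E s t \<Longrightarrow> cls ar E s = cls ar E t"
  unfolding cls_def by (meson eq_deriv.sym eq_deriv.trans)

lemma in_cls: "wf_trm ar t \<Longrightarrow> t \<in> cls ar E t"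
  unfolding cls_def by (simp add: eq_deriv.refl)

lemma some_cls: "wf_trm ar t \<Longrightarrow> eq_deriv ar E (SOME u. u \<in> cls ar E t) t"
proof -
  assume "wf_trm ar t"
  then have "(SOME u. u \<in> cls ar E t) \<in> cls ar E t" by (meson in_cls someI)
  then show ?thesis unfolding cls_def by simp
qed

lemma fops_cls: "length ts = ar f \<Longrightarrow> \<forall>t\<in>set ts. wf_trm ar t \<Longrightarrow>
   fops ar E f (map (cls ar E) ts) = cls ar E (Op f ts)"
  unfolding fops_def
  by (rule cls_eq, rule eq_deriv.cong) (auto intro!: some_cls)

lemma carrier_rep: "c \<in> fcarrier ar E X \<Longrightarrow>
   c = cls ar E (SOME t. c = cls ar E t \<and> wf_trm ar t \<and> vars t \<subseteq> X) \<and>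
   wf_trm ar (SOME t. c = cls ar E t \<and> wf_trm ar t \<and> vars t \<subseteq> X) \<and>
   vars (SOME t. c = cls ar E t \<and> wf_trm ar t \<and> vars t \<subseteq> X) \<subseteq> X"
  unfolding fcarrier_def by (rule someI_ex) blast

lemma fops_closed: "length cs = ar f \<Longrightarrow> set cs \<subseteq> fcarrier ar E X \<Longrightarrow> fops ar E f cs \<in> fcarrier ar E X"
proof -
  assume l: "length cs = ar f" and s: "set cs \<subseteq> fcarrier ar E X"
  define r where "r c = (SOME t. c = cls ar E t \<and> wf_trm ar t \<and> vars t \<subseteq> X)" for c
  have R: "c = cls ar E (r c) \<and> wf_trm ar (r c) \<and> vars (r c) \<subseteq> X" if "c \<in> set cs" for c
    using carrier_rep[of c ar E X] s that unfolding r_def by blast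
  have cs: "cs = map (cls ar E) (map r cs)" using R by (induction cs) auto
  have "fops ar E f cs = cls ar E (Op f (map r cs))"
    by (subst cs, rule fops_cls) (use l R in auto)
  moreover have "wf_trm ar (Op f (map r cs)) \<and> vars (Op f (map r cs)) \<subseteq> X" using l R by auto
  ultimately show ?thesis unfolding fcarrier_def by blast
qed

lemma hom_comp: assumes f: "f \<in> Hom ar E X Y" and g: "g \<in> Hom ar E Y Z"
  shows "compose (fcarrier ar E X) g f \<in> Hom ar E X Z"
proof -
  have fP: "f \<in> fcarrier ar E X \<rightarrow> fcarrier ar E Y" and gP: "g \<in> fcarrier ar E Y \<rightarrow> fcarrier ar E Z"
    using f g unfolding Hom_def is_hom_def FA_def by auto
  have fh: "\<And>h as. length as = ar h \<Longrightarrow> set as \<subseteq> fcarrier ar E X \<Longrightarrow> f (fops ar E h as) = fops ar E h (map f as)"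
    using f unfolding Hom_def is_hom_def FA_def by auto
  have gh: "\<And>h as. length as = ar h \<Longrightarrow> set as \<subseteq> fcarrier ar E Y \<Longrightarrow> g (fops ar E h as) = fops ar E h (map g as)"
    using g unfolding Hom_def is_hom_def FA_def by auto
  have "compose (fcarrier ar E X) g f (fops ar E h as) = fops ar E h (map (compose (fcarrier ar E X) g f) as)"
    if l: "length as = ar h" and s: "set as \<subseteq> fcarrier ar E X" for h as
  proof -
    have s2: "set (map f as) \<subseteq> fcarrier ar E Y" using s fP by auto
    have "compose (fcarrier ar E X) g f (fops ar E h as) = g (f (fops ar E h as))"
      using fops_closed[OF l s] by (simp add: compose_def)
    also have "\<dots> = fops ar E h (map g (map f as))" using fh[OF l s] gh[OF _ s2] l by simp
    also have "map g (map f as) = map (compose (fcarrier ar E X) g f) as"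
      using s by (auto simp: compose_def)
    finally show ?thesis .
  qed
  moreover have "compose (fcarrier ar E X) g f \<in> fcarrier ar E X \<rightarrow> fcarrier ar E Z"
    using fP gP by (auto simp: compose_def)
  ultimately show ?thesis unfolding Hom_def is_hom_def FA_def
    by (auto simp: compose_extensional)
qed

lemma var_in: "cls ar E (Var x0) \<in> fcarrier ar E {x0}"
  unfolding fcarrier_def by auto

lemma hom_unique: assumes "h1 \<in> Hom ar E {x0} Y" "h2 \<in> Hom ar E {x0} Y"
  "h1 (cls ar E (Var x0)) = h2 (cls ar E (Var x0))" shows "h1 = h2"
proof -
  have H1: "\<And>f as. length as = ar f \<Longrightarrow> set as \<subseteq> fcarrier ar E {x0} \<Longrightarrow> h1 (fops ar E f as) = fops ar E f (map h1 as)"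
    and H2: "\<And>f as. length as = ar f \<Longrightarrow> set as \<subseteq> fcarrier ar E {x0} \<Longrightarrow> h2 (fops ar E f as) = fops ar E f (map h2 as)"
    using assms unfolding Hom_def is_hom_def FA_def by auto
  have "wf_trm ar t \<Longrightarrow> vars t \<subseteq> {x0} \<Longrightarrow> h1 (cls ar E t) = h2 (cls ar E t)" for t
  proof (induction t)
    case (Var x) then show ?case using assms(3) by auto
  next
    case (Op f ts)
    have c: "set (map (cls ar E) ts) \<subseteq> fcarrier ar E {x0}" using Op.prems unfolding fcarrier_def by auto
    have "h1 (cls ar E (Op f ts)) = h1 (fops ar E f (map (cls ar E) ts))" using Op.prems by (simp add: fops_cls)
    also have "\<dots> = fops ar E f (map h1 (map (cls ar E) ts))" using H1 c Op.prems by simp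
    also have "\<dots> = fops ar E f (map h2 (map (cls ar E) ts))"
    proof -
      have "map h1 (map (cls ar E) ts) = map h2 (map (cls ar E) ts)" using Op.IH Op.prems by auto
      then show ?thesis by (simp only:)
    qed
    also have "\<dots> = h2 (fops ar E f (map (cls ar E) ts))" using H2 c Op.prems by simp
    also have "\<dots> = h2 (cls ar E (Op f ts))" using Op.prems by (simp add: fops_cls)
    finally show ?case .
  qed
  then have "\<forall>c\<in>fcarrier ar E {x0}. h1 c = h2 c" unfolding fcarrier_def by auto
  then show ?thesis using assms(1,2) unfolding Hom_def by (auto intro: extensionalityI)
qed



lemma alpha_exists:
  assumes V: "variety ar E" and c: "c \<in> fcarrier ar E Y"
  shows "\<exists>h. h \<in> Hom ar E {x0} Y \<and> h (cls ar E (Var x0)) = c"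
proof -
  obtain r where r: "c = cls ar E r" "wf_trm ar r" "vars r \<subseteq> Y" using c unfolding fcarrier_def by blast
  define \<sigma> where "\<sigma> = (\<lambda>_::'b. r)"
  have ws: "\<forall>x. wf_trm ar (\<sigma> x)" using r unfolding \<sigma>_def by simp
  define rep where "rep d = (SOME u. u \<in> d)" for d :: "('a,'b) trm set"
  define h where "h = (\<lambda>d. if d \<in> fcarrier ar E {x0} then cls ar E (subst \<sigma> (rep d)) else undefined)"
  have key: "h (cls ar E t) = cls ar E (subst \<sigma> t)" if "wf_trm ar t" "vars t \<subseteq> {x0}" for t
  proof -
    have "cls ar E t \<in> fcarrier ar E {x0}" using that unfolding fcarrier_def by blast
    moreover have "eq_deriv ar E (rep (cls ar E t)) t" unfolding rep_def using some_cls that(1) .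
    ultimately show ?thesis unfolding h_def using eq_subst ws cls_eq by metis
  qed
  have cr: "d = cls ar E (SOME t. d = cls ar E t \<and> wf_trm ar t \<and> vars t \<subseteq> {x0}) \<and>
   wf_trm ar (SOME t. d = cls ar E t \<and> wf_trm ar t \<and> vars t \<subseteq> {x0}) \<and>
   vars (SOME t. d = cls ar E t \<and> wf_trm ar t \<and> vars t \<subseteq> {x0}) \<subseteq> {x0}"
    if "d \<in> fcarrier ar E {x0}" for d using carrier_rep[OF that] .
  have hfun: "h d \<in> fcarrier ar E Y" if dC: "d \<in> fcarrier ar E {x0}" for d
  proof -
    obtain t where t: "d = cls ar E t" "wf_trm ar t" "vars t \<subseteq> {x0}" using dC unfolding fcarrier_def by blast
    have "wf_trm ar (subst \<sigma> t)" using wf_subst t ws by blast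
    moreover have "vars (subst \<sigma> t) \<subseteq> Y" using t r unfolding vars_subst \<sigma>_def by auto
    ultimately show ?thesis using key t unfolding fcarrier_def by auto
  qed
  have hom: "h (fops ar E f ds) = fops ar E f (map h ds)"
    if l: "length ds = ar f" and s: "set ds \<subseteq> fcarrier ar E {x0}" for f ds
  proof -
    define q where "q d = (SOME t. d = cls ar E t \<and> wf_trm ar t \<and> vars t \<subseteq> {x0})" for d
    have Q: "d = cls ar E (q d) \<and> wf_trm ar (q d) \<and> vars (q d) \<subseteq> {x0}" if "d \<in> set ds" for d
      using cr s that unfolding q_def by blast
    have ds: "ds = map (cls ar E) (map q ds)" using Q by (induction ds) auto
    have "fops ar E f ds = cls ar E (Op f (map q ds))"
      by (subst ds, rule fops_cls) (use l Q in auto)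
    then have "h (fops ar E f ds) = cls ar E (subst \<sigma> (Op f (map q ds)))"
      using key[of "Op f (map q ds)"] l Q by auto
    also have "\<dots> = cls ar E (Op f (map (subst \<sigma>) (map q ds)))" by simp
    also have "\<dots> = fops ar E f (map (cls ar E) (map (subst \<sigma>) (map q ds)))"
      by (rule fops_cls[symmetric]) (use l Q ws wf_subst[of ar _ \<sigma>] in auto)
    also have "map (cls ar E) (map (subst \<sigma>) (map q ds)) = map h ds"
    proof -
      have "\<And>d. d \<in> set ds \<Longrightarrow> cls ar E (subst \<sigma> (q d)) = h d" using Q key by metis
      then show ?thesis by (induction ds) auto
    qed
    finally show ?thesis .
  qed
  have hv: "h (cls ar E (Var x0)) = c" using key[of "Var x0"] r unfolding \<sigma>_def by simp
  have ext: "h \<in> extensional (fcarrier ar E {x0})" unfolding h_def extensional_def by auto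
  show ?thesis
    by (rule exI[of _ h]) (use hfun hom hv ext in \<open>auto simp: Hom_def is_hom_def FA_def\<close>)
qed

theorem theorem4:
  fixes ar :: "'o \<Rightarrow> nat"
    and E :: "(('o,'v) trm \<times> ('o,'v) trm) set"
    and Ob :: "'v set set"
    and x0 :: 'v
    and \<Phi>o :: "'v set \<Rightarrow> 'v set"
    and \<Phi>m :: "'v set \<Rightarrow> 'v set \<Rightarrow> (('o,'v) trm set \<Rightarrow> ('o,'v) trm set) \<Rightarrow> (('o,'v) trm set \<Rightarrow> ('o,'v) trm set)"
    and \<eta>0 :: "('o,'v) trm set \<Rightarrow> ('o,'v) trm set"
    and n :: nat
    and F :: "'v set"
    and xs :: "('o,'v) trm set list"
    and A :: "'v set"
    and \<omega> :: 'o
    and as :: "('o,'v) trm set list"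
    and \<theta> :: "('o,'v) trm set \<Rightarrow> ('o,'v) trm set"
  assumes "infinite (UNIV :: 'v set)"
    and "variety ar E"
    and "\<forall>X\<in>Ob. finite X"
    and "{x0} \<in> Ob"
    and "cat_auto ar E Ob \<Phi>o \<Phi>m"
    and "eta0_ok ar E Ob x0 \<Phi>o \<eta>0"
    and "\<forall>f. ar f < n"
    and "F \<in> Ob" and "length xs = n" and "distinct xs" and "free_basis ar E F (set xs)"
    and "A \<in> Ob" and "length as = ar \<omega>" and "set as \<subseteq> fcarrier ar E A"
    and "\<theta> \<in> Hom ar E F A" and "\<forall>i<ar \<omega>. \<theta> (xs ! i) = as ! i"
  shows "main_fn ar E Ob x0 \<Phi>o \<Phi>m \<eta>0 A (fops ar E \<omega> as)
           = \<Phi>m F A \<theta> (main_fn ar E Ob x0 \<Phi>o \<Phi>m \<eta>0 F (fops ar E \<omega> (take (ar \<omega>) xs)))"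
  proof -
  note a = assms
  let ?k = "ar \<omega>"
  let ?ys = "take ?k xs"
  let ?w = "fops ar E \<omega> ?ys"
  let ?P = "inv_into Ob \<Phi>o {x0}"
  have cat: "bij_betw \<Phi>o Ob Ob \<and>
     (\<forall>X\<in>Ob. \<forall>Y\<in>Ob. bij_betw (\<Phi>m X Y) (Hom ar E X Y) (Hom ar E (\<Phi>o X) (\<Phi>o Y))) \<and>
     (\<forall>X\<in>Ob. \<Phi>m X X (idm ar E X) = idm ar E (\<Phi>o X)) \<and>
     (\<forall>X\<in>Ob. \<forall>Y\<in>Ob. \<forall>Z\<in>Ob. \<forall>f\<in>Hom ar E X Y. \<forall>g\<in>Hom ar E Y Z.
        \<Phi>m X Z (compose (fcarrier ar E X) g f)
          = compose (fcarrier ar E (\<Phi>o X)) (\<Phi>m Y Z g) (\<Phi>m X Y f))"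
    using a(5) unfolding cat_auto_def .
  have bij: "bij_betw \<Phi>o Ob Ob" using cat by (rule conjunct1)
  have hb: "\<forall>X\<in>Ob. \<forall>Y\<in>Ob. bij_betw (\<Phi>m X Y) (Hom ar E X Y) (Hom ar E (\<Phi>o X) (\<Phi>o Y))"
    using cat by (rule conjunct1[OF conjunct2])
  have hc: "\<forall>X\<in>Ob. \<forall>Y\<in>Ob. \<forall>Z\<in>Ob. \<forall>f\<in>Hom ar E X Y. \<forall>g\<in>Hom ar E Y Z.
        \<Phi>m X Z (compose (fcarrier ar E X) g f)
          = compose (fcarrier ar E (\<Phi>o X)) (\<Phi>m Y Z g) (\<Phi>m X Y f)"
    using cat by (rule conjunct2[OF conjunct2[OF conjunct2]])
  have PO: "?P \<in> Ob" using bij a(4) by (metis bij_betw_def inv_into_into)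
  have PP: "\<Phi>o ?P = {x0}" proof -
    have "{x0} \<in> \<Phi>o ` Ob" using bij a(4) by (simp add: bij_betw_def)
    then show ?thesis by (rule f_inv_into_f)
  qed
  have eta: "\<eta>0 \<in> Hom ar E ?P {x0}" using a(6) unfolding eta0_ok_def Let_def by (rule conjunct1)
  have "\<Phi>m ?P {x0} \<eta>0 \<in> Hom ar E (\<Phi>o ?P) (\<Phi>o {x0})"
  proof -
    have "bij_betw (\<Phi>m ?P {x0}) (Hom ar E ?P {x0}) (Hom ar E (\<Phi>o ?P) (\<Phi>o {x0}))"
      using bspec[OF bspec[OF hb PO] a(4)] .
    then show ?thesis using eta by (rule bij_betw_apply)
  qed
  then have eHom: "\<Phi>m ?P {x0} \<eta>0 \<in> Hom ar E {x0} (\<Phi>o {x0})" using PP by simp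
  define e where "e = \<Phi>m ?P {x0} \<eta>0 (cls ar E (Var x0))"
  have e_in: "e \<in> fcarrier ar E (\<Phi>o {x0})"
  proof -
    have "\<Phi>m ?P {x0} \<eta>0 \<in> fcarrier ar E {x0} \<rightarrow> fcarrier ar E (\<Phi>o {x0})"
      using eHom unfolding Hom_def is_hom_def FA_def by auto
    then show ?thesis unfolding e_def using var_in by (rule funcset_mem)
  qed
  have xsF: "set xs \<subseteq> fcarrier ar E F" using a(11) unfolding free_basis_def by (rule conjunct1)
  have kn: "?k < length xs" using a(7) a(9) by auto
  have ysF: "set ?ys \<subseteq> fcarrier ar E F" using set_take_subset[of ?k xs] xsF by (rule subset_trans)
  have ylen: "length ?ys = ?k" using kn by simp
  have wF: "?w \<in> fcarrier ar E F" using ylen ysF by (rule fops_closed)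
  have mapth: "map \<theta> ?ys = as"
    by (rule nth_equalityI) (use kn a(13) a(16) in auto)
  have thh: "\<And>f bs. length bs = ar f \<Longrightarrow> set bs \<subseteq> fcarrier ar E F \<Longrightarrow> \<theta> (fops ar E f bs) = fops ar E f (map \<theta> bs)"
    using a(15) unfolding Hom_def is_hom_def FA_def by auto
  have thw: "\<theta> ?w = fops ar E \<omega> as"
    using thh[OF ylen ysF] mapth by simp
  obtain h where h: "h \<in> Hom ar E {x0} F" "h (cls ar E (Var x0)) = ?w"
    using alpha_exists[OF a(2) wF] by blast
  have alF: "alpha ar E x0 F ?w = h"
    unfolding alpha_def
    apply (rule the_equality)
     apply (rule conjI, rule h(1), rule h(2))
    apply (erule conjE)
    apply (rule hom_unique, assumption, rule h(1))
    using h(2) by simp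
  have ch: "compose (fcarrier ar E {x0}) \<theta> h \<in> Hom ar E {x0} A" using hom_comp h(1) a(15) by blast
  have chv: "compose (fcarrier ar E {x0}) \<theta> h (cls ar E (Var x0)) = fops ar E \<omega> as"
    using h(2) thw var_in[of ar E x0] by (simp add: compose_def)
  have alA: "alpha ar E x0 A (fops ar E \<omega> as) = compose (fcarrier ar E {x0}) \<theta> h"
    unfolding alpha_def
    apply (rule the_equality)
     apply (rule conjI, rule ch, rule chv)
    apply (erule conjE)
    apply (rule hom_unique, assumption, rule ch)
    using chv by simp
  have comp: "\<Phi>m {x0} A (compose (fcarrier ar E {x0}) \<theta> h)
     = compose (fcarrier ar E (\<Phi>o {x0})) (\<Phi>m F A \<theta>) (\<Phi>m {x0} F h)"
    using bspec[OF bspec[OF bspec[OF bspec[OF bspec[OF hc a(4)] a(8)] a(12)] h(1)] a(15)] .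
  show ?thesis
    unfolding main_fn_def alA alF comp e_def[symmetric]
    using e_in by (simp add: compose_def)
qed

end
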